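(* Let $n,k$ be positive integers with $k\le n$. Then (a) $\mathfrak r_{\triangle_{n,k}}=\sum_{i=0}^{k-1}(-1)^{k+i-1}q_{n-i}\,q_i$; (b) $\mathfrak r_{\triangle_{n,n-k+1}}=\mathfrak r_{\triangle_{n,k}}$.
   Context: Boxes $(r,c)$ are indexed by row $r$ (top to bottom) and column $c$. A connected ribbon corresponding to a composition $\alpha=(\alpha_1,\dots,\alpha_\ell)$ is an edgewise connected set of boxes with $\alpha_r$ consecutive boxes in row $r$, where the leftmost box of row $r$ lies directly above the rightmost box of row $r+1$. Let $\mathbf{P}'=\{1'<1<2'<2<\cdots\}$. For a ribbon $D$, a marked filling is a filling of its boxes by letters of $\mathbf{P}'$ with rows and columns weakly increasing, each column containing at most one unmarked $k$ and each row at most one marked $k'$; the ribbon Schur $Q$-function $\mathfrak r_D$ is $\sum_T x^{c(T)}$ over all such fillings, with $c(T)_i$ the number of entries equal to $i$ or $i'$ (this equals the skew Schur $Q$-function $Q_{\lambda/\mu}$ whenever $D$ is the shifted skew diagram $\widetilde{\lambda/\mu}$). $q_m=Q_{(m)}$ is the Schur $Q$-function of the one-row shape, with $q_0=1$. For $1\le k\le n$, $\triangle_{n,k}$ denotes the ribbon of composition $(1^{k-1},n-k+1)$, i.e. $k-1$ rows of one box followed by a row of $n-k+1$ boxes (equivalently the shifted skew diagram of $\lambda=(n,n-1,\dots,n-k+1)$ over $\mu=(n-1,\dots,n-k+1)$, $\mu=\emptyset$ if $k=1$); thus $\triangle_{n,1}$ is a single row and $\triangle_{n,n}$ a single column of $n$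 boxes. *)

theory Defs
  imports Main "HOL-Library.Poly_Mapping"
begin

text \<open>Letters of P' = {1' < 1 < 2' < 2 < ...} are encoded as positive naturals:
  k' is 2k-1 (odd = marked), k is 2k (even = unmarked); this encoding is order preserving.\<close>

text \<open>Formal power series in x_1, x_2, ... with integer coefficients:
  functions from monomials (finitely supported exponent vectors) to coefficients.\<close>
type_synonym pseries = "(nat \<Rightarrow>\<^sub>0 nat) \<Rightarrow> int"

definition ps_mult :: "pseries \<Rightarrow> pseries \<Rightarrow> pseries" where
  "ps_mult f g c = (\<Sum>p\<in>{p. fst p + snd p = c}. f (fst p) * g (snd p))"

text \<open>Row r (0-based, top to bottom) of the ribbon of composition alpha starts at column rstart alpha r;
  the last row starts in column 0 and the leftmost box of row r is above the rightmost box of row r+1.\<close>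
definition rstart :: "nat list \<Rightarrow> nat \<Rightarrow> nat" where
  "rstart \<alpha> r = (\<Sum>j\<in>{Suc r..<length \<alpha>}. \<alpha> ! j - 1)"

definition ribbon :: "nat list \<Rightarrow> (nat \<times> nat) set" where
  "ribbon \<alpha> = {(r, c). r < length \<alpha> \<and> rstart \<alpha> r \<le> c \<and> c < rstart \<alpha> r + \<alpha> ! r}"

definition marked_filling :: "(nat \<times> nat) set \<Rightarrow> (nat \<times> nat \<Rightarrow> nat) \<Rightarrow> bool" where
  "marked_filling D T \<longleftrightarrow>
     (\<forall>x. x \<notin> D \<longrightarrow> T x = 0) \<and>
     (\<forall>x\<in>D. 1 \<le> T x) \<and>
     (\<forall>r c c'. (r, c) \<in> D \<longrightarrow> (r, c') \<in> D \<longrightarrow> c < c' \<longrightarrow> T (r, c) \<le> T (r, c')) \<and>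
     (\<forall>r r' c. (r, c) \<in> D \<longrightarrow> (r', c) \<in> D \<longrightarrow> r < r' \<longrightarrow> T (r, c) \<le> T (r', c)) \<and>
     (\<forall>r r' c. (r, c) \<in> D \<longrightarrow> (r', c) \<in> D \<longrightarrow> r \<noteq> r' \<longrightarrow> T (r, c) = T (r', c) \<longrightarrow> odd (T (r, c))) \<and>
     (\<forall>r c c'. (r, c) \<in> D \<longrightarrow> (r, c') \<in> D \<longrightarrow> c \<noteq> c' \<longrightarrow> T (r, c) = T (r, c') \<longrightarrow> even (T (r, c)))"

definition content :: "(nat \<times> nat) set \<Rightarrow> (nat \<times> nat \<Rightarrow> nat) \<Rightarrow> nat \<Rightarrow> nat" where
  "content D T i = card {x\<in>D. T x = 2 * i - 1 \<or> T x = 2 * i}"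

text \<open>Ribbon Schur Q-function: coefficient of the monomial x^c.\<close>
definition rQ :: "(nat \<times> nat) set \<Rightarrow> pseries" where
  "rQ D c = int (card {T. marked_filling D T \<and> (\<forall>i. content D T i = Poly_Mapping.lookup c i)})"

definition qQ :: "nat \<Rightarrow> pseries" where
  "qQ m = rQ (ribbon [m])"

definition tri :: "nat \<Rightarrow> nat \<Rightarrow> (nat \<times> nat) set" where
  "tri n k = ribbon (replicate (k - 1) 1 @ [n - k + 1])"

end

theory Submission
  imports Defs "HOL-Library.Multiset"
begin


definition wcont :: "nat list \<Rightarrow> nat \<Rightarrow> nat" where
  "wcont w i = length (filter (\<lambda>x. x = 2*i-1 \<or> x = 2*i) w)"

definition okw :: "(nat \<Rightarrow> bool) \<Rightarrow> nat list \<Rightarrow> bool" where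
  "okw P w \<longleftrightarrow> sorted w \<and> (\<forall>x. \<not> P x \<longrightarrow> count (mset w) x \<le> 1)"

lemma okw_nth:
  "okw P w \<longleftrightarrow> (\<forall>i j. i < j \<longrightarrow> j < length w \<longrightarrow> w!i \<le> w!j \<and> (w!i = w!j \<longrightarrow> P (w!i)))"
proof -
  have c: "count (mset w) x \<le> 1 \<longleftrightarrow> (\<forall>i j. i < length w \<longrightarrow> j < length w \<longrightarrow> w!i = x \<longrightarrow> w!j = x \<longrightarrow> i = j)" for x
  proof -
    have "count (mset w) x = card {i. i < length w \<and> x = w!i}"
      by (simp add: count_mset count_list_eq_length_filter length_filter_conv_card)
    moreover have "card {i. i < length w \<and> x = w!i} \<le> Suc 0 \<longleftrightarrow> (\<forall>i j. i < length w \<longrightarrow> j < length w \<longrightarrow> w!i = x \<longrightarrow> w!j = x \<longrightarrow> i = j)"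
      by (subst card_le_Suc0_iff_eq) auto
    ultimately show ?thesis by simp
  qed
  show ?thesis
    unfolding okw_def sorted_iff_nth_mono_less c
    apply (rule iffI)
     apply (intro allI impI conjI)
      apply blast
     apply (metis less_trans less_not_refl)
    apply (intro conjI allI impI)
     apply blast
    by (metis nat_neq_iff)
qed

lemma wcont_append: "wcont (u @ v) i = wcont u i + wcont v i"
  by (simp add: wcont_def)

lemma wcont_mset: "mset u = mset v \<Longrightarrow> wcont u = wcont v"
  by (rule ext, simp add: wcont_def) (metis mset_filter size_mset)

definition sw :: "nat \<Rightarrow> nat" where "sw x = (if odd x then x + 1 else x - 1)"

lemma wcont_map_sw: "0 \<notin> set w \<Longrightarrow> wcont (map sw w) = wcont w"
proof (rule ext)
  fix i assume "0 \<notin> set w"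
  have "filter (\<lambda>x. x = 2*i-1 \<or> x = 2*i) (map sw w) = map sw (filter (\<lambda>x. sw x = 2*i-1 \<or> sw x = 2*i) w)"
    by (simp add: filter_map o_def)
  also have "filter (\<lambda>x. sw x = 2*i-1 \<or> sw x = 2*i) w = filter (\<lambda>x. x = 2*i-1 \<or> x = 2*i) w"
    using \<open>0 \<notin> set w\<close> by (intro filter_cong) (auto simp: sw_def, presburger+)
  finally show "wcont (map sw w) i = wcont w i" by (simp add: wcont_def)
qed

lemma sw_eq: "a \<noteq> 0 \<Longrightarrow> x \<noteq> 0 \<Longrightarrow> sw a = x \<longleftrightarrow> a = sw x"
  by (auto simp: sw_def)

lemma sw_sw: "a \<noteq> 0 \<Longrightarrow> sw (sw a) = a"
  by (auto simp: sw_def)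

lemma sw_nz: "a \<noteq> 0 \<Longrightarrow> sw a \<noteq> 0"
  by (auto simp: sw_def)

lemma count_map_sw: "0 \<notin> set w \<Longrightarrow> x \<noteq> 0 \<Longrightarrow> count (mset (map sw w)) x = count (mset w) (sw x)"
proof (induction w)
  case Nil then show ?case by simp
next
  case (Cons a w)
  then have "a \<noteq> 0" by auto
  with Cons show ?case using sw_eq[of a x] by auto
qed

lemma sort_mset_eq: "mset a = mset b \<Longrightarrow> sort a = sort b"
  by (metis properties_for_sort mset_sort sorted_sort)

definition WS :: "(nat \<Rightarrow> bool) \<Rightarrow> nat \<Rightarrow> (nat \<Rightarrow> nat) \<Rightarrow> nat list set" where
  "WS P m f = {w. length w = m \<and> 0 \<notin> set w \<and> okw P w \<and> wcont w = f}"

lemma WS_sw: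
  assumes PQ: "\<And>x. x \<noteq> 0 \<Longrightarrow> P (sw x) \<longleftrightarrow> Q x"
    and w: "w \<in> WS P m f"
  shows "sort (map sw w) \<in> WS Q m f"
proof -
  from w have len: "length w = m" and z: "0 \<notin> set w" and ok: "okw P w" and wc: "wcont w = f"
    by (auto simp: WS_def)
  have z2: "0 \<notin> set (sort (map sw w))" using z sw_nz by (auto, metis)
  have "okw Q (sort (map sw w))"
    unfolding okw_def
  proof (intro conjI allI impI)
    show "sorted (sort (map sw w))" by simp
    fix x assume "\<not> Q x"
    show "count (mset (sort (map sw w))) x \<le> 1"
    proof (cases "x = 0")
      case True then show ?thesis using z2 by (metis count_eq_zero_iff le0 set_mset_mset)
    next
      case False
      then have "count (mset (sort (map sw w))) x = count (mset w) (sw x)"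
        using count_map_sw[OF z] by simp
      moreover have "\<not> P (sw x)" using PQ[OF False] \<open>\<not> Q x\<close> by simp
      ultimately show ?thesis using ok by (simp add: okw_def)
    qed
  qed
  moreover have "wcont (sort (map sw w)) = f"
    using wcont_mset[of "sort (map sw w)" "map sw w"] wcont_map_sw[OF z] wc by simp
  ultimately show ?thesis using len z2 by (simp add: WS_def)
qed

lemma sort_sw_inv: "w \<in> WS P m f \<Longrightarrow> sort (map sw (sort (map sw w))) = w"
proof -
  assume w: "w \<in> WS P m f"
  then have z: "0 \<notin> set w" and s: "sorted w" by (auto simp: WS_def okw_def)
  have "sort (map sw (sort (map sw w))) = sort (map sw (map sw w))"
    by (rule sort_mset_eq) (simp add: multiset.map_comp)
  also have "map sw (map sw w) = w" using z sw_sw by (induction w) auto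
  finally show ?thesis using s by (simp add: sorted_sort_id)
qed

lemma card_WS_eq: "card (WS even m f) = card (WS odd m f)"
proof (rule bij_betw_same_card[of "\<lambda>w. sort (map sw w)"], rule bij_betw_byWitness[where f'="\<lambda>w. sort (map sw w)"])
  have e: "x \<noteq> 0 \<Longrightarrow> even (sw x) \<longleftrightarrow> odd x" for x by (auto simp: sw_def)
  have o: "x \<noteq> 0 \<Longrightarrow> odd (sw x) \<longleftrightarrow> even x" for x by (auto simp: sw_def)
  show "\<forall>a\<in>WS even m f. sort (map sw (sort (map sw a))) = a" using sort_sw_inv by blast
  show "\<forall>a\<in>WS odd m f. sort (map sw (sort (map sw a))) = a" using sort_sw_inv by blast
  show "(\<lambda>w. sort (map sw w)) ` WS even m f \<subseteq> WS odd m f" using WS_sw[of even odd] e by blast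
  show "(\<lambda>w. sort (map sw w)) ` WS odd m f \<subseteq> WS even m f" using WS_sw[of odd even] o by blast
qed



definition FS :: "(nat \<times> nat) set \<Rightarrow> (nat \<Rightarrow> nat) \<Rightarrow> (nat \<times> nat \<Rightarrow> nat) set" where
  "FS D f = {T. marked_filling D T \<and> (\<forall>i. content D T i = f i)}"

lemma rQ_FS: "rQ D c = int (card (FS D (Poly_Mapping.lookup c)))"
  by (simp add: rQ_def FS_def)

lemma content_bij:
  assumes "bij_betw \<pi> {..<length w} D" and "\<And>j. j < length w \<Longrightarrow> T (\<pi> j) = w!j"
  shows "content D T i = wcont w i"
proof -
  let ?P = "\<lambda>x. x = 2*i-1 \<or> x = 2*i"
  have "{x\<in>D. ?P (T x)} = \<pi> ` {j. j < length w \<and> ?P (w!j)}"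
    using assms unfolding bij_betw_def by force
  moreover have "inj_on \<pi> {j. j < length w \<and> ?P (w!j)}"
    using assms unfolding bij_betw_def by (rule_tac inj_on_subset) auto
  ultimately have "card {x\<in>D. ?P (T x)} = card {j. j < length w \<and> ?P (w!j)}"
    by (simp add: card_image)
  then show ?thesis by (simp add: content_def wcont_def length_filter_conv_card)
qed

lemma ribbon1: "ribbon [m] = {(r, j). r = 0 \<and> j < m}"
  by (auto simp: ribbon_def rstart_def)

lemma qQ_WS: "qQ m c = int (card (WS even m (Poly_Mapping.lookup c)))"
proof -
  let ?D = "ribbon [m]"
  let ?F = "\<lambda>T. map (\<lambda>j. T (0, j)) [0..<m]"
  let ?G = "\<lambda>w (r::nat, j::nat). if r = 0 \<and> j < m then w!j else (0::nat)"
  have bij: "bij_betw (\<lambda>j. (0::nat, j)) {..<m} ?D" unfolding ribbon1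
    by (auto simp: bij_betw_def inj_on_def)
  have "card (FS ?D (Poly_Mapping.lookup c)) = card (WS even m (Poly_Mapping.lookup c))"
  proof (rule bij_betw_same_card[of ?F], rule bij_betw_byWitness[where f'="?G"])
    show "\<forall>T\<in>FS ?D (Poly_Mapping.lookup c). ?G (?F T) = T"
    proof
      fix T assume "T \<in> FS ?D (Poly_Mapping.lookup c)"
      then have "\<forall>x. x \<notin> ?D \<longrightarrow> T x = 0" by (simp add: FS_def marked_filling_def)
      then show "?G (?F T) = T" unfolding ribbon1 by (auto simp: fun_eq_iff)
    qed
    show "\<forall>w\<in>WS even m (Poly_Mapping.lookup c). ?F (?G w) = w"
      by (auto simp: WS_def intro!: nth_equalityI)
    show "?F ` FS ?D (Poly_Mapping.lookup c) \<subseteq> WS even m (Poly_Mapping.lookup c)"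
    proof
      fix w assume "w \<in> ?F ` FS ?D (Poly_Mapping.lookup c)"
      then obtain T where T: "T \<in> FS ?D (Poly_Mapping.lookup c)" and w: "w = ?F T" by auto
      from T have mf: "marked_filling ?D T" and ct: "\<And>i. content ?D T i = Poly_Mapping.lookup c i"
        by (auto simp: FS_def)
      have "0 \<notin> set w" using mf unfolding w marked_filling_def ribbon1 by fastforce
      moreover have "okw even w" unfolding okw_nth w
        using mf unfolding marked_filling_def ribbon1 by auto (metis less_imp_neq less_trans)
      moreover have "wcont w = Poly_Mapping.lookup c"
      proof
        fix i show "wcont w i = Poly_Mapping.lookup c i"
          using content_bij[of "\<lambda>j. (0, j)" w ?D T i] bij ct[of i] by (simp add: w)
      qed
      ultimately show "w \<in> WS even m (Poly_Mapping.lookup c)" by (simp add: WS_def w)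
    qed
    show "?G ` WS even m (Poly_Mapping.lookup c) \<subseteq> FS ?D (Poly_Mapping.lookup c)"
    proof
      fix T assume "T \<in> ?G ` WS even m (Poly_Mapping.lookup c)"
      then obtain w where w: "w \<in> WS even m (Poly_Mapping.lookup c)" and T: "T = ?G w" by auto
      from w have len: "length w = m" and z: "0 \<notin> set w" and ok: "okw even w" and wc: "wcont w = Poly_Mapping.lookup c"
        by (auto simp: WS_def)
      have nz: "\<And>j. j < m \<Longrightarrow> 1 \<le> w!j" using z len
        by (metis One_nat_def less_one not_le nth_mem)
      have mono: "\<And>i j. i < j \<Longrightarrow> j < m \<Longrightarrow> w!i \<le> w!j" using ok len unfolding okw_nth by blast
      have par: "\<And>i j. i \<noteq> j \<Longrightarrow> i < m \<Longrightarrow> j < m \<Longrightarrow> w!i = w!j \<Longrightarrow> even (w!i)"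
        using ok len unfolding okw_nth by (metis nat_neq_iff)
      have "marked_filling ?D T"
        unfolding marked_filling_def ribbon1 T
        using nz mono par by auto
      moreover have "content ?D T i = Poly_Mapping.lookup c i" for i
        using content_bij[of "\<lambda>j. (0, j)" w ?D T i] bij len wc by (simp add: T)
      ultimately show "T \<in> FS ?D (Poly_Mapping.lookup c)" by (simp add: FS_def)
    qed
  qed
  then show ?thesis by (simp add: qQ_def rQ_FS)
qed



definition Dset :: "nat \<Rightarrow> nat \<Rightarrow> (nat \<times> nat) set" where
  "Dset a b = {(r, c). (r < a \<and> c = b) \<or> (r = a \<and> c \<le> b)}"

lemma tri_eq:
  assumes "1 \<le> k" "k \<le> n"
  shows "tri n k = Dset (k - 1) (n - k)"
proof -
  define al where "al = replicate (k - 1) (1::nat) @ [n - k + 1]"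
  have len: "length al = k" using assms by (simp add: al_def)
  have nth: "al ! j - 1 = (if j = k - 1 then n - k else 0)" if "j < k" for j
    using that assms by (auto simp: nth_append al_def)
  have rs: "rstart al r = (if r < k - 1 then n - k else 0)" if "r < k" for r
  proof -
    have "rstart al r = (\<Sum>j\<in>{Suc r..<k}. (if j = k - 1 then n - k else 0))"
      unfolding rstart_def len by (rule sum.cong[OF refl]) (rule nth, simp)
    also have "\<dots> = (if r < k - 1 then n - k else 0)"
      using that assms by (simp add: sum.delta)
    finally show ?thesis .
  qed
  have a: "al ! r = (if r < k - 1 then 1 else n - k + 1)" if "r < k" for r
    using that assms by (auto simp: nth_append al_def)
  have "tri n k = ribbon al" by (simp add: tri_def al_def)
  also have "ribbon al = Dset (k - 1) (n - k)"
    unfolding ribbon_def Dset_def len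
    using assms by (auto simp: rs a split: if_splits)
  finally show ?thesis .
qed

definition TW :: "nat \<Rightarrow> nat \<Rightarrow> (nat \<Rightarrow> nat) \<Rightarrow> (nat list \<times> nat list) set" where
  "TW a b f = {(C, R). length C = a \<and> length R = Suc b \<and> 0 \<notin> set C \<and> 0 \<notin> set R \<and>
      okw even R \<and> okw odd (C @ [last R]) \<and> wcont (C @ R) = f}"

lemma Dset_bij: "bij_betw (\<lambda>j. if j < a then (j, b) else (a, j - a)) {..<a + Suc b} (Dset a b)"
  unfolding bij_betw_def inj_on_def Dset_def
proof (intro conjI ballI impI)
  show "(\<lambda>j. if j < a then (j, b) else (a, j - a)) ` {..<a + Suc b} = {(r, c). r < a \<and> c = b \<or> r = a \<and> c \<le> b}"
  proof (rule set_eqI, rule iffI)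
    fix x assume "x \<in> {(r, c). r < a \<and> c = b \<or> r = a \<and> c \<le> b}"
    then obtain r c where x: "x = (r, c)" and h: "r < a \<and> c = b \<or> r = a \<and> c \<le> b" by auto
    show "x \<in> (\<lambda>j. if j < a then (j, b) else (a, j - a)) ` {..<a + Suc b}"
    proof (cases "r < a")
      case True then show ?thesis using h x by (auto intro!: image_eqI[where x = r])
    next
      case False then show ?thesis using h x by (auto intro!: image_eqI[where x = "a + c"])
    qed
  qed auto
qed (auto split: if_splits)

lemma W_nth: "length C = a \<Longrightarrow> r \<le> a \<Longrightarrow> (C @ [x]) ! r = (if r < a then C ! r else x)"
  by (auto simp: nth_append)

lemma TW_card: "rQ (Dset a b) c = int (card (TW a b (Poly_Mapping.lookup c)))"
proof -
  let ?D = "Dset a b"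
  let ?f = "Poly_Mapping.lookup c"
  let ?F = "\<lambda>T. (map (\<lambda>r. T (r, b)) [0..<a], map (\<lambda>j. T (a, j)) [0..<Suc b])"
  let ?G = "\<lambda>(C, R) (r::nat, j::nat). if r < a \<and> j = b then C ! r else if r = a \<and> j \<le> b then R ! j else (0::nat)"
  let ?\<pi> = "\<lambda>j. if j < a then (j, b) else (a, j - a)"
  have "card (FS ?D ?f) = card (TW a b ?f)"
  proof (rule bij_betw_same_card[of ?F], rule bij_betw_byWitness[where f'="?G"])
    show "\<forall>T\<in>FS ?D ?f. ?G (?F T) = T"
    proof
      fix T assume "T \<in> FS ?D ?f"
      then have "\<forall>x. x \<notin> ?D \<longrightarrow> T x = 0" by (simp add: FS_def marked_filling_def)
      then show "?G (?F T) = T" unfolding Dset_def by (auto simp: fun_eq_iff simp del: upt_Suc)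
    qed
    show "\<forall>p\<in>TW a b ?f. ?F (?G p) = p"
    proof
      fix p assume "p \<in> TW a b ?f"
      then obtain C R where p: "p = (C, R)" and l: "length C = a" "length R = Suc b"
        by (auto simp: TW_def)
      show "?F (?G p) = p" unfolding p using l
        by (auto intro!: nth_equalityI simp del: upt_Suc)
    qed
    show "?F ` FS ?D ?f \<subseteq> TW a b ?f"
    proof
      fix p assume "p \<in> ?F ` FS ?D ?f"
      then obtain T where T: "T \<in> FS ?D ?f" and p: "p = ?F T" by auto
      from T have mf: "marked_filling ?D T" and ct: "\<And>i. content ?D T i = ?f i"
        by (auto simp: FS_def)
      define C where "C = map (\<lambda>r. T (r, b)) [0..<a]"
      define R where "R = map (\<lambda>j. T (a, j)) [0..<Suc b]"
      have lastR: "last R = T (a, b)" by (simp add: R_def)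
      have W: "C @ [last R] = map (\<lambda>r. T (r, b)) [0..<Suc a]" by (simp add: C_def lastR)
      have inD1: "(r, b) \<in> ?D" if "r \<le> a" for r using that by (auto simp: Dset_def)
      have inD2: "(a, j) \<in> ?D" if "j \<le> b" for j using that by (auto simp: Dset_def)
      have pos: "\<And>x. x \<in> ?D \<Longrightarrow> 1 \<le> T x" using mf by (simp add: marked_filling_def)
      have nz1: "T (r, b) \<noteq> 0" if "r \<le> a" for r using pos[OF inD1[OF that]] by simp
      have nz2: "T (a, j) \<noteq> 0" if "j \<le> b" for j using pos[OF inD2[OF that]] by simp
      have z1: "0 \<notin> set C" unfolding C_def using nz1 by (auto simp del: upt_Suc) (metis less_imp_le less_irrefl)
      have z2: "0 \<notin> set R" unfolding R_def using nz2 by (auto simp del: upt_Suc) (metis less_Suc_eq_le less_irrefl)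
      have rowc: "T (a, j) \<le> T (a, j')" if "j' \<le> b" "j < j'" for j j'
        using mf inD2[of j] inD2[of j'] that unfolding marked_filling_def by simp
      have rowp: "even (T (a, j))" if "j \<le> b" "j' \<le> b" "j \<noteq> j'" "T (a, j) = T (a, j')" for j j'
        using mf inD2[of j] inD2[of j'] that unfolding marked_filling_def by blast
      have colc: "T (r, b) \<le> T (r', b)" if "r' \<le> a" "r < r'" for r r'
        using mf inD1[of r] inD1[of r'] that unfolding marked_filling_def by simp
      have colp: "odd (T (r, b))" if "r \<le> a" "r' \<le> a" "r \<noteq> r'" "T (r, b) = T (r', b)" for r r'
        using mf inD1[of r] inD1[of r'] that unfolding marked_filling_def by blast
      have okR: "okw even R" unfolding okw_nth R_def
      proof (intro allI impI)
        fix i j assume ij: "i < j" "j < length (map (\<lambda>j. T (a, j)) [0..<Suc b])"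
        then have ib: "i \<le> b" and jb: "j \<le> b" by auto
        have e1: "map (\<lambda>j. T (a, j)) [0..<Suc b] ! i = T (a, i)" using ib by (simp del: upt_Suc)
        have e2: "map (\<lambda>j. T (a, j)) [0..<Suc b] ! j = T (a, j)" using jb by (simp del: upt_Suc)
        show "map (\<lambda>j. T (a, j)) [0..<Suc b] ! i \<le> map (\<lambda>j. T (a, j)) [0..<Suc b] ! j \<and>
          (map (\<lambda>j. T (a, j)) [0..<Suc b] ! i = map (\<lambda>j. T (a, j)) [0..<Suc b] ! j \<longrightarrow>
           even (map (\<lambda>j. T (a, j)) [0..<Suc b] ! i))"
          unfolding e1 e2 using rowc[OF jb ij(1)] rowp[OF ib jb] ij(1) by simp
      qed
      have okW: "okw odd (C @ [last R])" unfolding okw_nth W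
      proof (intro allI impI)
        fix i j assume ij: "i < j" "j < length (map (\<lambda>r. T (r, b)) [0..<Suc a])"
        then have ib: "i \<le> a" and jb: "j \<le> a" by auto
        have e1: "map (\<lambda>r. T (r, b)) [0..<Suc a] ! i = T (i, b)" using ib by (simp del: upt_Suc)
        have e2: "map (\<lambda>r. T (r, b)) [0..<Suc a] ! j = T (j, b)" using jb by (simp del: upt_Suc)
        show "map (\<lambda>r. T (r, b)) [0..<Suc a] ! i \<le> map (\<lambda>r. T (r, b)) [0..<Suc a] ! j \<and>
          (map (\<lambda>r. T (r, b)) [0..<Suc a] ! i = map (\<lambda>r. T (r, b)) [0..<Suc a] ! j \<longrightarrow>
           odd (map (\<lambda>r. T (r, b)) [0..<Suc a] ! i))"
          unfolding e1 e2 using colc[OF jb ij(1)] colp[OF ib jb] ij(1) by simp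
      qed
      have lC: "length C = a" and lR: "length R = Suc b" by (simp_all add: C_def R_def)
      have wc: "wcont (C @ R) = ?f"
      proof
        fix i
        have "content ?D T i = wcont (C @ R) i"
        proof (rule content_bij)
          show "bij_betw ?\<pi> {..<length (C @ R)} ?D" using Dset_bij lC lR by simp
          show "T (?\<pi> j) = (C @ R) ! j" if "j < length (C @ R)" for j
            using that lC lR by (auto simp: nth_append C_def R_def simp del: upt_Suc)
        qed
        then show "wcont (C @ R) i = ?f i" using ct by simp
      qed
      have "p = (C, R)" by (simp add: p C_def R_def)
      then show "p \<in> TW a b ?f" using lC lR z1 z2 okR okW wc by (simp add: TW_def)
    qed
    show "?G ` TW a b ?f \<subseteq> FS ?D ?f"
    proof
      fix T assume "T \<in> ?G ` TW a b ?f"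
      then obtain C R where CR: "(C, R) \<in> TW a b ?f" and T: "T = ?G (C, R)" by auto
      from CR have lC: "length C = a" and lR: "length R = Suc b" and z1: "0 \<notin> set C"
        and z2: "0 \<notin> set R" and okR: "okw even R" and okW: "okw odd (C @ [last R])"
        and wc: "wcont (C @ R) = ?f"
        by (auto simp: TW_def)
      define W where "W = C @ [last R]"
      have lW: "length W = Suc a" using lC by (simp add: W_def)
      have lastR: "last R = R ! b" using lR by (metis last_conv_nth diff_Suc_1 list.size(3) nat.distinct(1))
      have TW1: "T (r, b) = W ! r" if "r \<le> a" for r
        using that lC lastR by (auto simp: T W_def nth_append)
      have TW2: "T (a, j) = R ! j" if "j \<le> b" for j
        using that by (simp add: T)
      have Wnz: "1 \<le> W ! r" if "r \<le> a" for r
      proof -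
        have "W ! r \<in> set W" using that lW by simp
        moreover have "0 \<notin> set W" using z1 z2 lR by (auto simp: W_def) (metis Zero_not_Suc last_in_set list.size(3) gr0I)
        ultimately show ?thesis by (metis One_nat_def less_one not_le)
      qed
      have Rnz: "1 \<le> R ! j" if "j \<le> b" for j
      proof -
        have "R ! j \<in> set R" using that lR by simp
        then show ?thesis using z2 by (metis One_nat_def less_one not_le)
      qed
      have Wm: "\<And>i j. i < j \<Longrightarrow> j \<le> a \<Longrightarrow> W!i \<le> W!j \<and> (W!i = W!j \<longrightarrow> odd (W!i))"
        using okW lW unfolding okw_nth W_def[symmetric] by auto
      have Rm: "\<And>i j. i < j \<Longrightarrow> j \<le> b \<Longrightarrow> R!i \<le> R!j \<and> (R!i = R!j \<longrightarrow> even (R!i))"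
        using okR lR unfolding okw_nth by auto
      have "marked_filling ?D T"
        unfolding marked_filling_def
      proof (intro conjI allI ballI impI)
        fix x assume "x \<notin> ?D" then show "T x = 0" by (auto simp: T Dset_def split: prod.splits)
      next
        fix x assume "x \<in> ?D" then show "1 \<le> T x"
          using Wnz Rnz TW1 TW2 by (auto simp: Dset_def)
      next
        fix r j j' assume "(r, j) \<in> ?D" "(r, j') \<in> ?D" "j < j'"
        then have "r = a" "j' \<le> b" by (auto simp: Dset_def)
        then show "T (r, j) \<le> T (r, j')" using Rm \<open>j < j'\<close> TW2 by simp
      next
        fix r r' j assume "(r, j) \<in> ?D" "(r', j) \<in> ?D" "r < r'"
        then have "j = b" "r' \<le> a" by (auto simp: Dset_def)
        then show "T (r, j) \<le> T (r', j)" using Wm \<open>r < r'\<close> TW1 by simp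
      next
        fix r r' j assume h: "(r, j) \<in> ?D" "(r', j) \<in> ?D" "r \<noteq> r'" "T (r, j) = T (r', j)"
        then have "j = b" "r' \<le> a" "r \<le> a" by (auto simp: Dset_def)
        then show "odd (T (r, j))" using Wm h TW1 by (metis nat_neq_iff)
      next
        fix r j j' assume h: "(r, j) \<in> ?D" "(r, j') \<in> ?D" "j \<noteq> j'" "T (r, j) = T (r, j')"
        then have "r = a" "j' \<le> b" "j \<le> b" by (auto simp: Dset_def)
        then show "even (T (r, j))" using Rm h TW2 by (metis nat_neq_iff)
      qed
      moreover have "content ?D T i = ?f i" for i
      proof -
        have "content ?D T i = wcont (C @ R) i"
        proof (rule content_bij)
          show "bij_betw ?\<pi> {..<length (C @ R)} ?D" using Dset_bij lC lR by simp
          show "T (?\<pi> j) = (C @ R) ! j" if "j < length (C @ R)" for j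
            using that lC lR by (auto simp: nth_append T)
        qed
        then show ?thesis using wc by simp
      qed
      ultimately show "T \<in> FS ?D ?f" by (simp add: FS_def)
    qed
  qed
  then show ?thesis by (simp add: rQ_FS)
qed



lemma wcont_pos: "x \<in> set w \<Longrightarrow> x \<noteq> 0 \<Longrightarrow> wcont w ((x + 1) div 2) \<noteq> 0"
proof -
  assume x: "x \<in> set w" "x \<noteq> 0"
  have "x = 2 * ((x + 1) div 2) - 1 \<or> x = 2 * ((x + 1) div 2)" by (cases "even x") (auto elim!: evenE oddE)
  then show ?thesis using x(1) unfolding wcont_def by (auto simp: filter_empty_conv)
qed

lemma wcont_fin: "finite {i. wcont w i \<noteq> 0}"
proof (rule finite_subset)
  show "{i. wcont w i \<noteq> 0} \<subseteq> insert 0 ((\<lambda>x. (x + 1) div 2) ` set w)"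
  proof
    fix i assume "i \<in> {i. wcont w i \<noteq> 0}"
    then obtain x where "x \<in> set w" "x = 2*i-1 \<or> x = 2*i"
      unfolding wcont_def by (auto simp: filter_empty_conv)
    then show "i \<in> insert 0 ((\<lambda>x. (x + 1) div 2) ` set w)"
      by (cases "i = 0") (auto intro!: image_eqI[where x = x])
  qed
qed simp

lemma lists_bounded_finite:
  "finite {w. length w = m \<and> 0 \<notin> set w \<and> (\<forall>i. wcont w i \<le> Poly_Mapping.lookup q i)}"
proof (rule finite_subset)
  let ?B = "2 * \<Sum>(Poly_Mapping.keys (q::nat \<Rightarrow>\<^sub>0 nat))"
  show "finite {w. set w \<subseteq> {..?B} \<and> length w = m}"
    by (rule finite_lists_length_eq) simp
  show "{w. length w = m \<and> 0 \<notin> set w \<and> (\<forall>i. wcont w i \<le> Poly_Mapping.lookup q i)} \<subseteq> {w. set w \<subseteq> {..?B} \<and> length w = m}"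
  proof
    fix w assume "w \<in> {w. length w = m \<and> 0 \<notin> set w \<and> (\<forall>i. wcont w i \<le> Poly_Mapping.lookup q i)}"
    then have h: "length w = m" "0 \<notin> set w" "\<forall>i. wcont w i \<le> Poly_Mapping.lookup q i" by auto
    have "set w \<subseteq> {..?B}"
    proof
      fix x assume x: "x \<in> set w"
      then have "x \<noteq> 0" using h(2) by metis
      then have "wcont w ((x + 1) div 2) \<noteq> 0" using wcont_pos x by blast
      then have "(x + 1) div 2 \<in> Poly_Mapping.keys q" using h(3) by (metis in_keys_iff le_zero_eq)
      then have "(x + 1) div 2 \<le> \<Sum>(Poly_Mapping.keys q)"
        using member_le_sum[of "(x+1) div 2" "Poly_Mapping.keys q" "\<lambda>i. i"] by simp
      then show "x \<in> {..?B}" by simp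
    qed
    then show "w \<in> {w. set w \<subseteq> {..?B} \<and> length w = m}" using h by simp
  qed
qed

lemma WS_finite: "finite (WS P m (Poly_Mapping.lookup q))"
  by (rule finite_subset[OF _ lists_bounded_finite[of m q]]) (auto simp: WS_def)

definition PW :: "nat \<Rightarrow> nat \<Rightarrow> (nat \<Rightarrow> nat) \<Rightarrow> (nat list \<times> nat list) set" where
  "PW a b f = {(u, v). length u = a \<and> length v = b \<and> 0 \<notin> set u \<and> 0 \<notin> set v \<and>
      okw even u \<and> okw odd v \<and> wcont (u @ v) = f}"

lemma pairs_finite: "finite {p :: (nat \<Rightarrow>\<^sub>0 nat) \<times> (nat \<Rightarrow>\<^sub>0 nat). fst p + snd p = c}"
proof -
  let ?M = "\<Sum>i\<in>Poly_Mapping.keys c. Poly_Mapping.lookup c i"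
  let ?Q = "{q :: nat \<Rightarrow>\<^sub>0 nat. \<forall>i. Poly_Mapping.lookup q i \<le> Poly_Mapping.lookup c i}"
  have "finite {f :: nat \<Rightarrow> nat. \<forall>x. (x \<in> Poly_Mapping.keys c \<longrightarrow> f x \<in> {..?M}) \<and> (x \<notin> Poly_Mapping.keys c \<longrightarrow> f x = 0)}"
    by (rule finite_set_of_finite_funs) auto
  moreover have "Poly_Mapping.lookup ` ?Q \<subseteq> {f. \<forall>x. (x \<in> Poly_Mapping.keys c \<longrightarrow> f x \<in> {..?M}) \<and> (x \<notin> Poly_Mapping.keys c \<longrightarrow> f x = 0)}"
  proof
    fix f assume "f \<in> Poly_Mapping.lookup ` ?Q"
    then obtain q where hq: "\<forall>i. Poly_Mapping.lookup q i \<le> Poly_Mapping.lookup c i"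
      and f: "f = Poly_Mapping.lookup q" by auto
    have "\<forall>x. (x \<in> Poly_Mapping.keys c \<longrightarrow> f x \<in> {..?M}) \<and> (x \<notin> Poly_Mapping.keys c \<longrightarrow> f x = 0)"
    proof (intro allI conjI impI)
      fix x assume "x \<in> Poly_Mapping.keys c"
      then have "Poly_Mapping.lookup c x \<le> ?M" by (simp add: member_le_sum)
      then show "f x \<in> {..?M}" using hq f by (metis atMost_iff order_trans)
    next
      fix x assume "x \<notin> Poly_Mapping.keys c"
      then show "f x = 0" using hq f by (metis in_keys_iff le_zero_eq)
    qed
    then show "f \<in> {f. \<forall>x. (x \<in> Poly_Mapping.keys c \<longrightarrow> f x \<in> {..?M}) \<and> (x \<notin> Poly_Mapping.keys c \<longrightarrow> f x = 0)}" by simp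
  qed
  ultimately have "finite (Poly_Mapping.lookup ` ?Q)" by (rule finite_subset[rotated])
  then have fQ: "finite ?Q"
    by (rule finite_imageD) (simp add: inj_on_def poly_mapping.lookup_inject)
  have sub: "{p :: (nat \<Rightarrow>\<^sub>0 nat) \<times> (nat \<Rightarrow>\<^sub>0 nat). fst p + snd p = c} \<subseteq> ?Q \<times> ?Q"
  proof
    fix p :: "(nat \<Rightarrow>\<^sub>0 nat) \<times> (nat \<Rightarrow>\<^sub>0 nat)"
    assume "p \<in> {p. fst p + snd p = c}"
    then have "\<And>i. Poly_Mapping.lookup c i = Poly_Mapping.lookup (fst p) i + Poly_Mapping.lookup (snd p) i"
      by (auto simp: lookup_add)
    then show "p \<in> ?Q \<times> ?Q" by (simp add: mem_Times_iff)
  qed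
  have "finite (?Q \<times> ?Q)" using fQ by simp
  then show ?thesis using sub by (rule finite_subset[rotated])
qed

lemma ps_mult_PW: "ps_mult (qQ a) (qQ b) c = int (card (PW a b (Poly_Mapping.lookup c)))"
proof -
  let ?P = "{p :: (nat \<Rightarrow>\<^sub>0 nat) \<times> (nat \<Rightarrow>\<^sub>0 nat). fst p + snd p = c}"
  let ?A = "\<lambda>p. WS even a (Poly_Mapping.lookup (fst p)) \<times> WS odd b (Poly_Mapping.lookup (snd p))"
  have "ps_mult (qQ a) (qQ b) c = (\<Sum>p\<in>?P. int (card (?A p)))"
    unfolding ps_mult_def qQ_WS card_WS_eq[of b] by (simp add: card_cartesian_product)
  also have "\<dots> = int (\<Sum>p\<in>?P. card (?A p))" by simp
  also have "(\<Sum>p\<in>?P. card (?A p)) = card (\<Union> (?A ` ?P))"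
  proof (rule card_UN_disjoint[symmetric])
    show "finite ?P" by (rule pairs_finite)
    show "\<forall>p\<in>?P. finite (?A p)" using WS_finite by blast
    show "\<forall>p\<in>?P. \<forall>p'\<in>?P. p \<noteq> p' \<longrightarrow> ?A p \<inter> ?A p' = {}"
    proof (intro ballI impI)
      fix p p' :: "(nat \<Rightarrow>\<^sub>0 nat) \<times> (nat \<Rightarrow>\<^sub>0 nat)" assume "p \<noteq> p'"
      then have "fst p \<noteq> fst p' \<or> snd p \<noteq> snd p'" by (auto simp: prod_eq_iff)
      then have "Poly_Mapping.lookup (fst p) \<noteq> Poly_Mapping.lookup (fst p') \<or>
                 Poly_Mapping.lookup (snd p) \<noteq> Poly_Mapping.lookup (snd p')"
        by (auto simp: poly_mapping.lookup_inject)
      then show "?A p \<inter> ?A p' = {}" by (auto simp: WS_def)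
    qed
  qed
  also have "\<Union> (?A ` ?P) = PW a b (Poly_Mapping.lookup c)"
  proof (rule set_eqI, rule iffI)
    fix x assume "x \<in> \<Union> (?A ` ?P)"
    then obtain p where p: "fst p + snd p = c" and x: "x \<in> ?A p" by auto
    then show "x \<in> PW a b (Poly_Mapping.lookup c)"
      by (auto simp: WS_def PW_def fun_eq_iff wcont_append lookup_add)
  next
    fix x assume "x \<in> PW a b (Poly_Mapping.lookup c)"
    then obtain u v where x: "x = (u, v)" and h: "length u = a" "length v = b" "0 \<notin> set u" "0 \<notin> set v"
      "okw even u" "okw odd v" "wcont (u @ v) = Poly_Mapping.lookup c" by (auto simp: PW_def)
    let ?p = "(Abs_poly_mapping (wcont u), Abs_poly_mapping (wcont v))"
    have lu: "Poly_Mapping.lookup (Abs_poly_mapping (wcont u)) = wcont u"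
      by (rule lookup_Abs_poly_mapping) (rule wcont_fin)
    have lv: "Poly_Mapping.lookup (Abs_poly_mapping (wcont v)) = wcont v"
      by (rule lookup_Abs_poly_mapping) (rule wcont_fin)
    have "fst ?p + snd ?p = c"
      by (rule poly_mapping_eqI) (simp add: lookup_add lu lv h(7)[symmetric] wcont_append)
    moreover have "x \<in> ?A ?p" using h by (simp add: x lu lv WS_def)
    ultimately show "x \<in> \<Union> (?A ` ?P)" by blast
  qed
  finally show ?thesis .
qed



lemma sorted_le_last: "sorted w \<Longrightarrow> y \<in> set w \<Longrightarrow> y \<le> last w"
proof (induction w rule: rev_induct)
  case Nil then show ?case by simp
next
  case (snoc z xs) then show ?case by (auto simp: sorted_append)
qed

lemma okw_Nil: "okw P []" by (simp add: okw_def)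

lemma okw_snoc:
  assumes "w \<noteq> []"
  shows "okw P (w @ [x]) \<longleftrightarrow> okw P w \<and> last w \<le> x \<and> (last w = x \<longrightarrow> P x)"
proof -
  have cnt: "count (mset (w @ [x])) y = count (mset w) y + (if y = x then 1 else 0)" for y by simp
  have lin: "last w \<in> set w" using assms by simp
  show ?thesis
  proof
    assume h: "okw P (w @ [x])"
    then have s: "sorted (w @ [x])" and c: "\<And>y. \<not> P y \<Longrightarrow> count (mset (w @ [x])) y \<le> 1"
      by (auto simp: okw_def)
    have sw: "sorted w" using s by (simp add: sorted_append)
    have "\<And>y. \<not> P y \<Longrightarrow> count (mset w) y \<le> 1" using c cnt by (metis add_leD1)
    then have ow: "okw P w" using sw by (simp add: okw_def)
    have lx: "last w \<le> x" using s lin by (simp add: sorted_append)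
    have "last w = x \<longrightarrow> P x"
    proof
      assume e: "last w = x"
      show "P x"
      proof (rule ccontr)
        assume "\<not> P x"
        then have "count (mset (w @ [x])) x \<le> 1" using c by blast
        moreover have "count (mset w) x \<ge> 1" using lin e by simp
        ultimately show False using cnt[of x] by simp
      qed
    qed
    then show "okw P w \<and> last w \<le> x \<and> (last w = x \<longrightarrow> P x)" using ow lx by simp
  next
    assume h: "okw P w \<and> last w \<le> x \<and> (last w = x \<longrightarrow> P x)"
    then have sw: "sorted w" and cw: "\<And>y. \<not> P y \<Longrightarrow> count (mset w) y \<le> 1" and lx: "last w \<le> x"
      and e: "last w = x \<longrightarrow> P x" by (auto simp: okw_def)
    have s: "sorted (w @ [x])" using sw lx sorted_le_last[OF sw] by (auto simp: sorted_append intro: order_trans)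
    have "count (mset (w @ [x])) y \<le> 1" if "\<not> P y" for y
    proof (cases "y = x")
      case True
      then have "last w < x" using e that lx by auto
      then have "x \<notin> set w" using sorted_le_last[OF sw] by fastforce
      then show ?thesis using True cnt[of y] by (simp add: count_eq_zero_iff)
    next
      case False then show ?thesis using cw[OF that] cnt[of y] by simp
    qed
    then show "okw P (w @ [x])" using s by (simp add: okw_def)
  qed
qed

lemma okw_prefix: "okw P (w @ [x]) \<Longrightarrow> okw P w"
  by (cases "w = []") (simp_all add: okw_Nil okw_snoc)

lemma key_alt:
  assumes "u \<noteq> []" "v \<noteq> []" "\<not> okw odd (v @ [last u])" "okw even u" "okw odd v"
  shows "okw even (u @ [last v])"
  using assms by (auto simp: okw_snoc)

lemma wcont_swap: "wcont (u @ v) = wcont (v @ u)"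
  by (rule ext) (simp add: wcont_append)

lemma wcont_rot: "wcont (xs @ ys @ [z]) = wcont (ys @ xs @ [z])"
  by (rule ext) (simp add: wcont_append)

lemma PW_finite: "finite (PW a b (Poly_Mapping.lookup c))"
proof (rule finite_subset)
  let ?L = "\<lambda>m. {w. length w = m \<and> 0 \<notin> set w \<and> (\<forall>i. wcont w i \<le> Poly_Mapping.lookup c i)}"
  show "finite (?L a \<times> ?L b)" using lists_bounded_finite by blast
  show "PW a b (Poly_Mapping.lookup c) \<subseteq> ?L a \<times> ?L b"
    by (auto simp: PW_def) (metis le_add1 le_add2 wcont_append)+
qed

lemma PW_split:
  assumes "1 \<le> a" "1 \<le> b"
  shows "card (PW a b (Poly_Mapping.lookup c)) =
         card (TW b (a - 1) (Poly_Mapping.lookup c)) + card (TW (b - 1) a (Poly_Mapping.lookup c))"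
proof -
  let ?f = "Poly_Mapping.lookup c"
  let ?A1 = "{p \<in> PW a b ?f. okw odd (snd p @ [last (fst p)])}"
  let ?A2 = "{p \<in> PW a b ?f. \<not> okw odd (snd p @ [last (fst p)])}"
  have fin: "finite (PW a b ?f)" by (rule PW_finite)
  have "PW a b ?f = ?A1 \<union> ?A2" by blast
  then have "card (PW a b ?f) = card ?A1 + card ?A2"
    using fin by (metis (no_types, lifting) card_Un_disjoint finite_Un disjoint_iff mem_Collect_eq)
  moreover have "card ?A1 = card (TW b (a - 1) ?f)"
  proof (rule bij_betw_same_card[of "\<lambda>(u, v). (v, u)"], rule bij_betw_byWitness[where f'="\<lambda>(u, v). (v, u)"])
    show "\<forall>p\<in>?A1. (\<lambda>(u, v). (v, u)) ((\<lambda>(u, v). (v, u)) p) = p" by auto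
    show "\<forall>p\<in>TW b (a - 1) ?f. (\<lambda>(u, v). (v, u)) ((\<lambda>(u, v). (v, u)) p) = p" by auto
    show "(\<lambda>(u, v). (v, u)) ` ?A1 \<subseteq> TW b (a - 1) ?f"
      using assms by (auto simp: PW_def TW_def wcont_swap)
    show "(\<lambda>(u, v). (v, u)) ` TW b (a - 1) ?f \<subseteq> ?A1"
      using assms by (auto simp: PW_def TW_def wcont_swap intro: okw_prefix)
  qed
  moreover have "card ?A2 = card (TW (b - 1) a ?f)"
  proof (rule bij_betw_same_card[of "\<lambda>(u, v). (butlast v, u @ [last v])"],
         rule bij_betw_byWitness[where f'="\<lambda>(C, R). (butlast R, C @ [last R])"])
    show "\<forall>p\<in>?A2. (\<lambda>(C, R). (butlast R, C @ [last R])) ((\<lambda>(u, v). (butlast v, u @ [last v])) p) = p"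
    proof
      fix p assume "p \<in> ?A2"
      then obtain u v where p: "p = (u, v)" and lv: "length v = b" by (auto simp: PW_def)
      then have "v \<noteq> []" using assms by auto
      then show "(\<lambda>(C, R). (butlast R, C @ [last R])) ((\<lambda>(u, v). (butlast v, u @ [last v])) p) = p"
        by (simp add: p)
    qed
    show "\<forall>p\<in>TW (b - 1) a ?f. (\<lambda>(u, v). (butlast v, u @ [last v])) ((\<lambda>(C, R). (butlast R, C @ [last R])) p) = p"
    proof
      fix p assume "p \<in> TW (b - 1) a ?f"
      then obtain C R where p: "p = (C, R)" and lR: "length R = Suc a" by (auto simp: TW_def)
      then have "R \<noteq> []" by auto
      then show "(\<lambda>(u, v). (butlast v, u @ [last v])) ((\<lambda>(C, R). (butlast R, C @ [last R])) p) = p"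
        by (simp add: p)
    qed
    show "(\<lambda>(u, v). (butlast v, u @ [last v])) ` ?A2 \<subseteq> TW (b - 1) a ?f"
    proof
      fix q assume "q \<in> (\<lambda>(u, v). (butlast v, u @ [last v])) ` ?A2"
      then obtain u v where q: "q = (butlast v, u @ [last v])" and uv: "(u, v) \<in> ?A2" by auto
      from uv have h: "length u = a" "length v = b" "0 \<notin> set u" "0 \<notin> set v"
        "okw even u" "okw odd v" "wcont (u @ v) = ?f" "\<not> okw odd (v @ [last u])"
        by (auto simp: PW_def)
      have ne: "u \<noteq> []" "v \<noteq> []" using h(1,2) assms by auto
      have vv: "butlast v @ [last v] = v" using ne(2) by simp
      have "0 \<notin> set (butlast v)" using h(4) in_set_butlastD by metis
      moreover have "last v \<noteq> 0" using h(4) ne(2) last_in_set by metis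
      moreover have "okw even (u @ [last v])" using key_alt ne h by blast
      moreover have "wcont (butlast v @ u @ [last v]) = ?f"
        using h(7) vv wcont_rot[of "butlast v" u "last v"] by (metis append_assoc)
      ultimately show "q \<in> TW (b - 1) a ?f" using h ne vv by (simp add: q TW_def)
    qed
    show "(\<lambda>(C, R). (butlast R, C @ [last R])) ` TW (b - 1) a ?f \<subseteq> ?A2"
    proof
      fix q assume "q \<in> (\<lambda>(C, R). (butlast R, C @ [last R])) ` TW (b - 1) a ?f"
      then obtain C R where q: "q = (butlast R, C @ [last R])" and CR: "(C, R) \<in> TW (b - 1) a ?f" by auto
      from CR have h: "length C = b - 1" "length R = Suc a" "0 \<notin> set C" "0 \<notin> set R"
        "okw even R" "okw odd (C @ [last R])" "wcont (C @ R) = ?f"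
        by (auto simp: TW_def)
      have lb: "length (butlast R) = a" using h(2) by simp
      have ne1: "butlast R \<noteq> []" using lb assms by (metis One_nat_def list.size(3) not_one_le_zero)
      have ne: "R \<noteq> []" "butlast R \<noteq> []" using ne1 by auto
      have rr: "butlast R @ [last R] = R" using ne(1) by simp
      have okb: "okw even (butlast R)" using h(5) rr okw_prefix by metis
      have nk: "\<not> okw odd ((C @ [last R]) @ [last (butlast R)])"
      proof
        assume a1: "okw odd ((C @ [last R]) @ [last (butlast R)])"
        have "C @ [last R] \<noteq> []" by simp
        from okw_snoc[OF this, of odd "last (butlast R)"] a1 have "last R \<le> last (butlast R) \<and> (last R = last (butlast R) \<longrightarrow> odd (last R))"
          by simp
        moreover have "last (butlast R) \<le> last R \<and> (last (butlast R) = last R \<longrightarrow> even (last R))"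
          using h(5) okw_snoc[OF ne(2), of even "last R"] rr by simp
        ultimately show False by auto
      qed
      have "0 \<notin> set (butlast R)" using h(4) in_set_butlastD by metis
      moreover have "last R \<noteq> 0" using h(4) ne(1) last_in_set by metis
      moreover have "wcont (butlast R @ C @ [last R]) = ?f"
        using h(7) rr wcont_rot[of "butlast R" C "last R"] by (metis append_assoc)
      ultimately show "q \<in> ?A2" using h ne okb nk assms by (simp add: q PW_def length_butlast)
    qed
  qed
  ultimately show ?thesis by simp
qed



lemma ps_mult_comm: "ps_mult f g = ps_mult g f"
proof (rule ext)
  fix c
  show "ps_mult f g c = ps_mult g f c"
    unfolding ps_mult_def
    by (rule sum.reindex_bij_witness[where i=prod.swap and j=prod.swap]) (auto simp: add.commute mult.commute)
qed

lemma R1: "1 \<le> n \<Longrightarrow> rQ (tri n 1) = qQ n"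
  by (simp add: tri_def qQ_def)

lemma card_TW_col: "card (TW m 0 f) = card (WS odd (Suc m) f)"
proof (rule bij_betw_same_card[of "\<lambda>(C, R). C @ R"], rule bij_betw_byWitness[where f'="\<lambda>w. (butlast w, [last w])"])
  show "\<forall>p\<in>TW m 0 f. (\<lambda>w. (butlast w, [last w])) ((\<lambda>(C, R). C @ R) p) = p"
  proof
    fix p assume "p \<in> TW m 0 f"
    then obtain C R where p: "p = (C, R)" and l: "length R = 1" by (auto simp: TW_def)
    then obtain x where "R = [x]" by (metis One_nat_def length_0_conv length_Suc_conv)
    then show "(\<lambda>w. (butlast w, [last w])) ((\<lambda>(C, R). C @ R) p) = p" by (simp add: p)
  qed
  show "\<forall>w\<in>WS odd (Suc m) f. (\<lambda>(C, R). C @ R) ((\<lambda>w. (butlast w, [last w])) w) = w"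
    by (auto simp: WS_def) (metis append_butlast_last_id length_0_conv nat.distinct(1))
  show "(\<lambda>(C, R). C @ R) ` TW m 0 f \<subseteq> WS odd (Suc m) f"
  proof
    fix w assume "w \<in> (\<lambda>(C, R). C @ R) ` TW m 0 f"
    then obtain C R where w: "w = C @ R" and CR: "(C, R) \<in> TW m 0 f" by auto
    then have l: "length R = 1" by (auto simp: TW_def)
    then obtain x where "R = [x]" by (metis One_nat_def length_0_conv length_Suc_conv)
    then show "w \<in> WS odd (Suc m) f" using CR by (auto simp: TW_def WS_def w)
  qed
  show "(\<lambda>w. (butlast w, [last w])) ` WS odd (Suc m) f \<subseteq> TW m 0 f"
  proof
    fix p assume "p \<in> (\<lambda>w. (butlast w, [last w])) ` WS odd (Suc m) f"
    then obtain w where p: "p = (butlast w, [last w])" and w: "w \<in> WS odd (Suc m) f" by auto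
    then have ne: "w \<noteq> []" by (auto simp: WS_def)
    have e: "butlast w @ [last w] = w" using ne by simp
    from w have lw: "length w = Suc m" and zw: "0 \<notin> set w" and ow: "okw odd w" and cw: "wcont w = f"
      by (auto simp: WS_def)
    have o1: "okw even [last w]" by (simp add: okw_def)
    have z1: "0 \<notin> set (butlast w)" using zw in_set_butlastD by metis
    have z2: "0 \<notin> set [last w]" using zw ne last_in_set by (metis empty_iff empty_set set_ConsD)
    have o2: "okw odd (butlast w @ [last [last w]])" using ow e by simp
    have c2: "wcont (butlast w @ [last w]) = f" using cw e by simp
    have l1: "length (butlast w) = m" using lw by simp
    show "p \<in> TW m 0 f" unfolding p TW_def using o1 z1 z2 o2 c2 l1 by simp
  qed
qed

lemma Rn: "1 \<le> n \<Longrightarrow> rQ (tri n n) c = qQ n c"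
proof -
  assume n: "1 \<le> n"
  have "rQ (tri n n) c = int (card (TW (n - 1) 0 (Poly_Mapping.lookup c)))"
    using tri_eq[of n n] n TW_card by simp
  also have "\<dots> = int (card (WS odd n (Poly_Mapping.lookup c)))"
    using card_TW_col[of "n - 1"] n by simp
  also have "\<dots> = qQ n c" by (simp add: qQ_WS card_WS_eq)
  finally show ?thesis .
qed

lemma card_PW0: "card (PW m 0 f) = card (WS even m f)"
proof (rule bij_betw_same_card[of fst], rule bij_betw_byWitness[where f'="\<lambda>u. (u, [])"])
  show "\<forall>p\<in>PW m 0 f. (fst p, []) = p" by (auto simp: PW_def)
  show "\<forall>u\<in>WS even m f. fst (u, []) = u" by simp
  show "fst ` PW m 0 f \<subseteq> WS even m f" by (auto simp: PW_def WS_def)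
  show "(\<lambda>u. (u, [])) ` WS even m f \<subseteq> PW m 0 f" by (auto simp: PW_def WS_def okw_Nil)
qed

lemma P0: "ps_mult (qQ n) (qQ 0) c = qQ n c"
  by (simp add: ps_mult_PW card_PW0 qQ_WS)

lemma Pi:
  assumes "1 \<le> i" "i < n"
  shows "ps_mult (qQ (n - i)) (qQ i) c = rQ (tri n (i + 1)) c + rQ (tri n i) c"
proof -
  have "ps_mult (qQ (n - i)) (qQ i) c = int (card (PW (n - i) i (Poly_Mapping.lookup c)))"
    by (rule ps_mult_PW)
  also have "\<dots> = int (card (TW i (n - i - 1) (Poly_Mapping.lookup c))) + int (card (TW (i - 1) (n - i) (Poly_Mapping.lookup c)))"
    using PW_split[of "n - i" i c] assms by simp
  also have "\<dots> = rQ (tri n (i + 1)) c + rQ (tri n i) c"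
    using tri_eq[of "i + 1" n] tri_eq[of i n] assms TW_card by (simp add: diff_diff_add)
  finally show ?thesis .
qed

theorem mainTheorem9:
  fixes n k :: nat
  assumes "1 \<le> k" and "k \<le> n"
  shows "rQ (tri n k) = (\<lambda>c. \<Sum>i<k. (-1::int) ^ (k + i - 1) * ps_mult (qQ (n - i)) (qQ i) c) \<and>
         rQ (tri n (n - k + 1)) = rQ (tri n k)"
proof
  have n1: "1 \<le> n" using assms by simp
  have A: "1 \<le> k \<longrightarrow> k \<le> n \<longrightarrow> rQ (tri n k) c = (\<Sum>i<k. (-1::int) ^ (k + i - 1) * ps_mult (qQ (n - i)) (qQ i) c)" for k c
  proof (induction k)
    case 0 then show ?case by simp
  next
    case (Suc k)
    show ?case
    proof (intro impI)
      assume "1 \<le> Suc k" "Suc k \<le> n"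
      show "rQ (tri n (Suc k)) c = (\<Sum>i<Suc k. (-1::int) ^ (Suc k + i - 1) * ps_mult (qQ (n - i)) (qQ i) c)"
      proof (cases "k = 0")
        case True then show ?thesis using R1[OF n1] P0[of n c] by simp
      next
        case False
        then have k1: "1 \<le> k" and kn: "k < n" using \<open>Suc k \<le> n\<close> by auto
        have IH: "rQ (tri n k) c = (\<Sum>i<k. (-1::int) ^ (k + i - 1) * ps_mult (qQ (n - i)) (qQ i) c)"
          using Suc.IH k1 kn by simp
        have sg: "(-1::int) ^ (Suc k + i - 1) = - ((-1) ^ (k + i - 1))" for i
        proof -
          have "Suc k + i - 1 = Suc (k + i - 1)" using k1 by simp
          then show ?thesis by (simp only: power_Suc mult_minus1)
        qed
        have "rQ (tri n (Suc k)) c = ps_mult (qQ (n - k)) (qQ k) c - rQ (tri n k) c"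
          using Pi[OF k1 kn, of c] by simp
        also have "\<dots> = ps_mult (qQ (n - k)) (qQ k) c + (\<Sum>i<k. (-1::int) ^ (Suc k + i - 1) * ps_mult (qQ (n - i)) (qQ i) c)"
          unfolding IH sg by (simp add: sum_negf)
        also have "\<dots> = (\<Sum>i<Suc k. (-1::int) ^ (Suc k + i - 1) * ps_mult (qQ (n - i)) (qQ i) c)"
          by (simp add: add.commute)
        finally show ?thesis .
      qed
    qed
  qed
  show "rQ (tri n k) = (\<lambda>c. \<Sum>i<k. (-1::int) ^ (k + i - 1) * ps_mult (qQ (n - i)) (qQ i) c)"
  proof
    fix c show "rQ (tri n k) c = (\<Sum>i<k. (-1::int) ^ (k + i - 1) * ps_mult (qQ (n - i)) (qQ i) c)"
      using A[of k c] assms by blast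
  qed
  have B: "1 \<le> i \<longrightarrow> i \<le> n \<longrightarrow> rQ (tri n (n + 1 - i)) c = rQ (tri n i) c" for i c
  proof (induction i)
    case 0 then show ?case by simp
  next
    case (Suc i)
    show ?case
    proof (intro impI)
      assume "1 \<le> Suc i" "Suc i \<le> n"
      show "rQ (tri n (n + 1 - Suc i)) c = rQ (tri n (Suc i)) c"
      proof (cases "i = 0")
        case True then show ?thesis using R1[OF n1] Rn[OF n1, of c] by simp
      next
        case False
        then have i1: "1 \<le> i" and iN: "i < n" using \<open>Suc i \<le> n\<close> by auto
        have IH: "rQ (tri n (n + 1 - i)) c = rQ (tri n i) c" using Suc.IH i1 iN by simp
        have j1: "1 \<le> n - i" and jn: "n - i < n" using i1 iN by auto
        have e1: "ps_mult (qQ (n - (n - i))) (qQ (n - i)) c = rQ (tri n (n - i + 1)) c + rQ (tri n (n - i)) c"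
          by (rule Pi[OF j1 jn])
        have e2: "n - (n - i) = i" using iN by simp
        have e3: "n - i + 1 = n + 1 - i" using iN by simp
        have "ps_mult (qQ i) (qQ (n - i)) = ps_mult (qQ (n - i)) (qQ i)" by (rule ps_mult_comm)
        then have "rQ (tri n (i + 1)) c + rQ (tri n i) c = rQ (tri n (n + 1 - i)) c + rQ (tri n (n - i)) c"
          using e1 Pi[OF i1 iN, of c] unfolding e2 e3 by simp
        then have "rQ (tri n (n - i)) c = rQ (tri n (Suc i)) c" using IH by simp
        moreover have "n + 1 - Suc i = n - i" by simp
        ultimately show ?thesis by simp
      qed
    qed
  qed
  have e: "n - k + 1 = n + 1 - k" using assms by simp
  show "rQ (tri n (n - k + 1)) = rQ (tri n k)"
  proof
    fix c show "rQ (tri n (n - k + 1)) c = rQ (tri n k) c" unfolding e using B[of k c] assms by blast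
  qed
qed


end
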